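(* Let $n=d_z\le d=d_x$. Suppose that for every $\theta\in\Theta$: $f_\theta:\mathcal{X}\to\mathbb{R}^n$ is differentiable, surjective onto $\mathbb{R}^n$, and its Jacobian has full rank $n$ everywhere; and there exist $2n+1$ points $y^0,\dots,y^{2n}\in\mathcal{Y}$ such that the $2n\times 2n$ matrix $\tilde R_\theta=\big(\tilde g_\theta(y^1)-\tilde g_\theta(y^0),\dots,\tilde g_\theta(y^{2n})-\tilde g_\theta(y^0)\big)$ is invertible. Then for any $\theta,\theta'\in\Theta$, if $\tilde p_\theta(x\mid y)=\tilde p_{\theta'}(x\mid y)$ for all $x,y$, there exist a permutation $\sigma$ of $\{1,\dots,n\}$, nonzero scalars $a_i$ and scalars $c_i$ such that $f_{i,\theta}(x)=a_if_{\sigma(i),\theta'}(x)+c_i$ for all $i$ and all $x\in\mathcal{X}$.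
   Context: Let $\mathcal{X}\subset\mathbb{R}^{d_x}$, $\mathcal{Y}\subset\mathbb{R}^{d_y}$. A parameter set $\Theta$ indexes pairs $f_\theta=(f_{1,\theta},\dots,f_{n,\theta}):\mathcal{X}\to\mathbb{R}^{n}$ and $\tilde g_\theta:\mathcal{Y}\to\mathbb{R}^{2n}$. The augmented feature map is $\tilde f_\theta(x)=(f_{1,\theta}(x),f_{1,\theta}(x)^2,\dots,f_{n,\theta}(x),f_{n,\theta}(x)^2)\in\mathbb{R}^{2n}$, and the augmented conditional energy model is $\tilde p_\theta(x\mid y)=\exp(-\tilde f_\theta(x)^\top\tilde g_\theta(y))/\tilde Z(y;\theta)$, where $\Theta$ is such that $\tilde Z(y;\theta)=\int_{\mathcal{X}}\exp(-\tilde f_\theta(x)^\top\tilde g_\theta(y))\,dx<\infty$ for all $y$. *)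

theory Defs
  imports "HOL-Analysis.Analysis"
begin

text \<open>Augmented feature map: the index (i, False) carries f_i(x), the index (i, True)
  carries f_i(x)^2, so that the 2n coordinates are (f_1, f_1^2, ..., f_n, f_n^2).\<close>
definition aug_feat :: "('x \<Rightarrow> real^'n) \<Rightarrow> 'x \<Rightarrow> real^('n \<times> bool)" where
  "aug_feat f x = (\<chi> p. if snd p then (f x $ fst p)^2 else f x $ fst p)"

definition aug_energy ::
  "(real^'d \<Rightarrow> real^'n) \<Rightarrow> ('y \<Rightarrow> real^('n \<times> bool)) \<Rightarrow> 'y \<Rightarrow> real^'d \<Rightarrow> real" where
  "aug_energy f g y x = exp (- (aug_feat f x \<bullet> g y))"

definition aug_Z ::
  "(real^'d) set \<Rightarrow> (real^'d \<Rightarrow> real^'n) \<Rightarrow> ('y \<Rightarrow> real^('n \<times> bool)) \<Rightarrow> 'y \<Rightarrow> real" where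
  "aug_Z X f g y = integral X (aug_energy f g y)"

definition aug_p ::
  "(real^'d) set \<Rightarrow> (real^'d \<Rightarrow> real^'n) \<Rightarrow> ('y \<Rightarrow> real^('n \<times> bool)) \<Rightarrow> real^'d \<Rightarrow> 'y \<Rightarrow> real" where
  "aug_p X f g x y = aug_energy f g y x / aug_Z X f g y"

end

theory Submission
  imports Defs
begin


lemma quartic_lead:
  fixes a b c a' b' c' :: real
  assumes h: "\<forall>t. (a*t + b*t^2 + c)^2 = a'*t + b'*t^2 + c'"
  shows "b = 0"
proof -
  have e2: "(2*a+4*b+c)^2 = 2*a'+4*b'+c'" using h[rule_format, of 2] by (simp add: mult.commute)
  have e1: "(a+b+c)^2 = a'+b'+c'" using h[rule_format, of 1] by simp
  have e0: "c^2 = c'" using h[rule_format, of 0] by simp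
  have em1: "(-a+b+c)^2 = -a'+b'+c'" using h[rule_format, of "-1"] by simp
  have em2: "(-2*a+4*b+c)^2 = -2*a'+4*b'+c'" using h[rule_format, of "-2"] by (simp add: mult.commute)
  have id: "(2*a+4*b+c)^2 - 4*(a+b+c)^2 + 6*c^2 - 4*(-a+b+c)^2 + (-2*a+4*b+c)^2 = 24*b^2"
    by algebra
  have "b^2 = 0" using e2 e1 e0 em1 em2 id by linarith
  then show ?thesis by simp
qed

lemma cross_term:
  fixes a b c a' b' a2 b2 c' :: real
  assumes h: "\<forall>s t. (a * s + b * t + c)^2 = a' * s + a2 * s^2 + b'*t + b2*t^2 + c'"
  shows "a * b = 0"
proof -
  have e1: "(a+b+c)^2 = a'+a2+b'+b2+c'" using h[rule_format, of 1 1] by simp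
  have e2: "(a-b+c)^2 = a'+a2-b'+b2+c'" using h[rule_format, of 1 "-1"] by simp
  have e3: "(-a+b+c)^2 = -a'+a2+b'+b2+c'" using h[rule_format, of "-1" 1] by simp
  have e4: "(-a-b+c)^2 = -a'+a2-b'+b2+c'" using h[rule_format, of "-1" "-1"] by simp
  have id: "(a+b+c)^2 - (a-b+c)^2 - (-a+b+c)^2 + (-a-b+c)^2 = 8*(a*b)" by algebra
  show ?thesis using e1 e2 e3 e4 id by linarith
qed

lemma sum_axis1:
  fixes h :: "'n::finite \<Rightarrow> real \<Rightarrow> real"
  assumes "\<And>l. h l 0 = 0"
  shows "(\<Sum>l\<in>UNIV. h l ((\<chi> m. if m = j then s else 0) $ l)) = h j s"
proof -
  have "(\<Sum>l\<in>UNIV. h l ((\<chi> m. if m = j then s else 0) $ l)) = (\<Sum>l\<in>UNIV. if l = j then h j s else 0)"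
    by (rule sum.cong) (auto simp: assms)
  then show ?thesis by simp
qed

lemma sum_axis2:
  fixes h :: "'n::finite \<Rightarrow> real \<Rightarrow> real"
  assumes "\<And>l. h l 0 = 0" "j \<noteq> k"
  shows "(\<Sum>l\<in>UNIV. h l ((\<chi> m. if m = j then s else if m = k then t else 0) $ l)) = h j s + h k t"
proof -
  have "(\<Sum>l\<in>UNIV. h l ((\<chi> m. if m = j then s else if m = k then t else 0) $ l))
     = (\<Sum>l\<in>UNIV. (if l = j then h j s else 0) + (if l = k then h k t else 0))"
    by (rule sum.cong) (use assms in auto)
  then show ?thesis by (simp add: sum.distrib)
qed

lemma quad_struct:
  fixes u u' :: "real^('n::finite\<times>bool)"
  assumes H: "\<forall>z::real^'n. ((\<Sum>l\<in>UNIV. u$(l,False)*z$l + u$(l,True)*(z$l)^2) + c)^2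
            = (\<Sum>l\<in>UNIV. u'$(l,False)*z$l + u'$(l,True)*(z$l)^2) + c'"
  shows "u$(j,True) = 0" and "j \<noteq> k \<Longrightarrow> u$(j,False)*u$(k,False) = 0"
proof -
  have "\<forall>t. (u$(j,False)*t + u$(j,True)*t^2 + c)^2 = u'$(j,False)*t + u'$(j,True)*t^2 + c'"
  proof
    fix t
    show "(u$(j,False)*t + u$(j,True)*t^2 + c)^2 = u'$(j,False)*t + u'$(j,True)*t^2 + c'"
      using H[rule_format, of "\<chi> m. if m = j then t else 0"]
        sum_axis1[of "\<lambda>l r. u$(l,False)*r + u$(l,True)*r^2" j t]
        sum_axis1[of "\<lambda>l r. u'$(l,False)*r + u'$(l,True)*r^2" j t]
      by simp
  qed
  then show tj: "u$(j,True) = 0" by (rule quartic_lead)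
  assume jk: "j \<noteq> k"
  have tk: "u$(k,True) = 0"
  proof -
    have "\<forall>t. (u$(k,False)*t + u$(k,True)*t^2 + c)^2 = u'$(k,False)*t + u'$(k,True)*t^2 + c'"
    proof
      fix t
      show "(u$(k,False)*t + u$(k,True)*t^2 + c)^2 = u'$(k,False)*t + u'$(k,True)*t^2 + c'"
        using H[rule_format, of "\<chi> m. if m = k then t else 0"]
          sum_axis1[of "\<lambda>l r. u$(l,False)*r + u$(l,True)*r^2" k t]
          sum_axis1[of "\<lambda>l r. u'$(l,False)*r + u'$(l,True)*r^2" k t]
        by simp
    qed
    then show ?thesis by (rule quartic_lead)
  qed
  have "\<forall>s t. (u$(j,False)* s + u$(k,False)*t + c)^2
     = u'$(j,False)* s + u'$(j,True)* s^2 + u'$(k,False)*t + u'$(k,True)*t^2 + c'"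
  proof (intro allI)
    fix s t
    show "(u$(j,False)* s + u$(k,False)*t + c)^2
     = u'$(j,False)* s + u'$(j,True)* s^2 + u'$(k,False)*t + u'$(k,True)*t^2 + c'"
      using H[rule_format, of "\<chi> m. if m = j then s else if m = k then t else 0"]
        sum_axis2[of "\<lambda>l r. u$(l,False)*r + u$(l,True)*r^2" j k s t]
        sum_axis2[of "\<lambda>l r. u'$(l,False)*r + u'$(l,True)*r^2" j k s t] jk tj tk
      by (simp add: algebra_simps)
  qed
  then show "u$(j,False)*u$(k,False) = 0" by (rule cross_term)
qed

lemma aug_inner:
  "aug_feat F x \<bullet> (u :: real^('n::finite\<times>bool)) = (\<Sum>l\<in>UNIV. u$(l,False) * F x $ l + u$(l,True) * (F x $ l)^2)"
proof -
  have "aug_feat F x \<bullet> u = (\<Sum>p\<in>UNIV \<times> UNIV. aug_feat F x $ p * u $ p)"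
    by (simp add: inner_vec_def)
  also have "\<dots> = (\<Sum>l\<in>UNIV. \<Sum>b\<in>UNIV. aug_feat F x $ (l,b) * u $ (l,b))"
    by (simp add: sum.cartesian_product)
  also have "\<dots> = (\<Sum>l\<in>UNIV. u$(l,False) * F x $ l + u$(l,True) * (F x $ l)^2)"
    by (simp add: UNIV_bool aug_feat_def mult.commute)
  finally show ?thesis .
qed

lemma stepA:
  fixes X :: "(real^'d) set" and Y :: "'y set"
    and F1 F2 :: "real^'d \<Rightarrow> real^'n::finite"
    and G1 G2 :: "'y \<Rightarrow> real^('n \<times> bool)"
  assumes Z1: "\<And>y. y \<in> Y \<Longrightarrow> 0 < aug_Z X F1 G1 y"
    and Z2: "\<And>y. y \<in> Y \<Longrightarrow> 0 < aug_Z X F2 G2 y"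
    and y0: "y0 \<in> Y" and ys: "\<forall>k. ys k \<in> Y"
    and inv: "invertible (\<chi> j k. (G1 (ys k) - G1 y0) $ j :: real^('n \<times> bool)^('n \<times> bool))"
    and eq: "\<forall>x\<in>X. \<forall>y\<in>Y. aug_p X F1 G1 x y = aug_p X F2 G2 x y"
  shows "\<exists>u c. \<forall>x\<in>X. aug_feat F1 x $ p = aug_feat F2 x \<bullet> u + c"
proof -
  define D where "D y = ln (aug_Z X F2 G2 y) - ln (aug_Z X F1 G1 y)" for y
  have key: "aug_feat F1 x \<bullet> G1 y = aug_feat F2 x \<bullet> G2 y + D y" if x: "x \<in> X" and y: "y \<in> Y" for x y
  proof -
    have "exp (- (aug_feat F1 x \<bullet> G1 y)) / aug_Z X F1 G1 y = exp (- (aug_feat F2 x \<bullet> G2 y)) / aug_Z X F2 G2 y"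
      using eq x y by (simp add: aug_p_def aug_energy_def)
    then have "ln (exp (- (aug_feat F1 x \<bullet> G1 y)) / aug_Z X F1 G1 y) = ln (exp (- (aug_feat F2 x \<bullet> G2 y)) / aug_Z X F2 G2 y)"
      by (rule arg_cong)
    then have "- (aug_feat F1 x \<bullet> G1 y) - ln (aug_Z X F1 G1 y) = - (aug_feat F2 x \<bullet> G2 y) - ln (aug_Z X F2 G2 y)"
      using Z1[OF y] Z2[OF y] by (simp add: ln_div)
    then show ?thesis by (simp add: D_def)
  qed
  define v where "v k = G1 (ys k) - G1 y0" for k
  define v' where "v' k = G2 (ys k) - G2 y0" for k
  define d where "d k = D (ys k) - D y0" for k
  have k2: "aug_feat F1 x \<bullet> v k = aug_feat F2 x \<bullet> v' k + d k" if x: "x \<in> X" for x k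
    using key[OF x ys[rule_format, of k]] key[OF x y0]
    by (simp add: v_def v'_def d_def inner_diff_right)
  define R where "R = (\<chi> j k. (G1 (ys k) - G1 y0) $ j :: real^('n \<times> bool)^('n \<times> bool))"
  obtain Ri where RRi: "R ** Ri = mat 1" using inv unfolding invertible_def R_def by blast
  have entry: "(\<Sum>k\<in>UNIV. R$j$k * Ri$k$p) = (if j = p then 1 else 0)" for j
  proof -
    have "(R ** Ri)$j$p = (mat 1 :: real^('n \<times> bool)^('n \<times> bool))$j$p" by (simp add: RRi)
    then show ?thesis by (simp add: matrix_matrix_mult_def mat_def)
  qed
  have Rjk: "R$j$k = v k $ j" for j k by (simp add: R_def v_def)
  have rep: "w $ p = (\<Sum>k\<in>UNIV. Ri$k$p * (w \<bullet> v k))" for w :: "real^('n\<times>bool)"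
  proof -
    have "(\<Sum>k\<in>UNIV. Ri$k$p * (w \<bullet> v k)) = (\<Sum>k\<in>UNIV. \<Sum>j\<in>UNIV. Ri$k$p * (w$j * v k $ j))"
      by (simp add: inner_vec_def sum_distrib_left)
    also have "\<dots> = (\<Sum>j\<in>UNIV. \<Sum>k\<in>UNIV. Ri$k$p * (w$j * v k $ j))"
      by (rule sum.swap)
    also have "\<dots> = (\<Sum>j\<in>UNIV. w$j * (\<Sum>k\<in>UNIV. R$j$k * Ri$k$p))"
      by (simp add: sum_distrib_left Rjk mult_ac)
    also have "\<dots> = (\<Sum>j\<in>UNIV. if j = p then w$j else 0)"
      by (rule sum.cong) (auto simp: entry)
    also have "\<dots> = w $ p" by simp
    finally show ?thesis by simp
  qed
  show ?thesis
  proof (intro exI ballI)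
    fix x assume x: "x \<in> X"
    have "aug_feat F1 x $ p = (\<Sum>k\<in>UNIV. Ri$k$p * (aug_feat F1 x \<bullet> v k))"
      by (rule rep)
    also have "\<dots> = (\<Sum>k\<in>UNIV. Ri$k$p * (aug_feat F2 x \<bullet> v' k + d k))"
      by (simp add: k2[OF x])
    also have "\<dots> = aug_feat F2 x \<bullet> (\<Sum>k\<in>UNIV. Ri$k$p *\<^sub>R v' k) + (\<Sum>k\<in>UNIV. Ri$k$p * d k)"
      by (simp add: inner_sum_right sum.distrib distrib_left)
    finally show "aug_feat F1 x $ p = aug_feat F2 x \<bullet> (\<Sum>k\<in>UNIV. Ri$k$p *\<^sub>R v' k) + (\<Sum>k\<in>UNIV. Ri$k$p * d k)" .
  qed
qed


lemma stepL:
  fixes X :: "(real^'d) set" and Y :: "'y set"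
    and F1 F2 :: "real^'d \<Rightarrow> real^'n::finite"
    and G1 G2 :: "'y \<Rightarrow> real^('n \<times> bool)"
  assumes Z1: "\<And>y. y \<in> Y \<Longrightarrow> 0 < aug_Z X F1 G1 y"
    and Z2: "\<And>y. y \<in> Y \<Longrightarrow> 0 < aug_Z X F2 G2 y"
    and y0: "y0 \<in> Y" and ys: "\<forall>k. ys k \<in> Y"
    and inv: "invertible (\<chi> j k. (G1 (ys k) - G1 y0) $ j :: real^('n \<times> bool)^('n \<times> bool))"
    and eq: "\<forall>x\<in>X. \<forall>y\<in>Y. aug_p X F1 G1 x y = aug_p X F2 G2 x y"
    and surj: "F2 ` X = UNIV"
  shows "\<exists>\<alpha> c. (\<forall>x\<in>X. F1 x $ i = (\<Sum>l\<in>UNIV. \<alpha> l * F2 x $ l) + c) \<and> (\<forall>j k. j \<noteq> k \<longrightarrow> \<alpha> j * \<alpha> k = 0)"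
proof -
  obtain u c where u: "\<forall>x\<in>X. aug_feat F1 x $ (i,False) = aug_feat F2 x \<bullet> u + c"
    using stepA[OF Z1 Z2 y0 ys inv eq] by blast
  obtain u' c' where u': "\<forall>x\<in>X. aug_feat F1 x $ (i,True) = aug_feat F2 x \<bullet> u' + c'"
    using stepA[OF Z1 Z2 y0 ys inv eq] by blast
  have a1: "aug_feat F1 x $ (i,False) = F1 x $ i" for x by (simp add: aug_feat_def)
  have a2: "aug_feat F1 x $ (i,True) = (F1 x $ i)^2" for x by (simp add: aug_feat_def)
  have l1: "F1 x $ i = (\<Sum>l\<in>UNIV. u$(l,False) * F2 x $ l + u$(l,True) * (F2 x $ l)^2) + c" if "x \<in> X" for x
    using u that by (simp add: aug_inner a1)
  have l2: "(F1 x $ i)^2 = (\<Sum>l\<in>UNIV. u'$(l,False) * F2 x $ l + u'$(l,True) * (F2 x $ l)^2) + c'" if "x \<in> X" for x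
    using u' that by (simp add: aug_inner a2)
  have H: "\<forall>z::real^'n. ((\<Sum>l\<in>UNIV. u$(l,False)*z$l + u$(l,True)*(z$l)^2) + c)^2
            = (\<Sum>l\<in>UNIV. u'$(l,False)*z$l + u'$(l,True)*(z$l)^2) + c'"
  proof
    fix z :: "real^'n"
    obtain x where x: "x \<in> X" "F2 x = z" using surj by (metis UNIV_I imageE)
    show "((\<Sum>l\<in>UNIV. u$(l,False)*z$l + u$(l,True)*(z$l)^2) + c)^2
            = (\<Sum>l\<in>UNIV. u'$(l,False)*z$l + u'$(l,True)*(z$l)^2) + c'"
      using l1[OF x(1)] l2[OF x(1)] x(2) by simp
  qed
  have T: "u$(l,True) = 0" for l using quad_struct(1)[OF H] .
  have C: "\<forall>j k. j \<noteq> k \<longrightarrow> u$(j,False) * u$(k,False) = 0" using quad_struct(2)[OF H] by blast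
  show ?thesis
    by (rule exI[of _ "\<lambda>l. u$(l,False)"], rule exI[of _ c]) (use l1 T C in simp)
qed



theorem mainTheorem3:
  fixes X :: "(real^'d) set"
    and Y :: "(real^'dy) set"
    and Theta :: "'th set"
    and f :: "'th \<Rightarrow> real^'d \<Rightarrow> real^'n"
    and g :: "'th \<Rightarrow> real^'dy \<Rightarrow> real^('n \<times> bool)"
  assumes dim: "CARD('n) \<le> CARD('d)"
    and Z_fin: "\<And>th y. th \<in> Theta \<Longrightarrow> y \<in> Y \<Longrightarrow>
                  aug_energy (f th) (g th) y integrable_on X \<and> 0 < aug_Z X (f th) (g th) y"
    and diff: "\<And>th x. th \<in> Theta \<Longrightarrow> x \<in> X \<Longrightarrow>
                  \<exists>f'. (f th has_derivative f') (at x within X) \<and> rank (matrix f') = CARD('n)"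
    and surj: "\<And>th. th \<in> Theta \<Longrightarrow> f th ` X = UNIV"
    and var: "\<And>th. th \<in> Theta \<Longrightarrow>
                  \<exists>y0 ys. y0 \<in> Y \<and> (\<forall>k. ys k \<in> Y) \<and>
                    invertible (\<chi> j k. (g th (ys k) - g th y0) $ j :: real^('n \<times> bool)^('n \<times> bool))"
    and th: "th \<in> Theta" and th': "th' \<in> Theta"
    and eq: "\<forall>x\<in>X. \<forall>y\<in>Y. aug_p X (f th) (g th) x y = aug_p X (f th') (g th') x y"
  shows "\<exists>\<sigma> a c. \<sigma> permutes (UNIV :: 'n set) \<and> (\<forall>i. a i \<noteq> (0::real)) \<and>
           (\<forall>i. \<forall>x\<in>X. f th x $ i = a i * f th' x $ (\<sigma> i) + c i)"
proof -
  have Z1: "\<And>y. y \<in> Y \<Longrightarrow> 0 < aug_Z X (f th) (g th) y" using Z_fin th by blast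
  have Z2: "\<And>y. y \<in> Y \<Longrightarrow> 0 < aug_Z X (f th') (g th') y" using Z_fin th' by blast
  obtain y0 ys where y0: "y0 \<in> Y" and ys: "\<forall>k. ys k \<in> Y" and
    inv: "invertible (\<chi> j k. (g th (ys k) - g th y0) $ j :: real^('n \<times> bool)^('n \<times> bool))"
    using var[OF th] by blast
  obtain y0' ys' where y0': "y0' \<in> Y" and ys': "\<forall>k. ys' k \<in> Y" and
    inv': "invertible (\<chi> j k. (g th' (ys' k) - g th' y0') $ j :: real^('n \<times> bool)^('n \<times> bool))"
    using var[OF th'] by blast
  have eq': "\<forall>x\<in>X. \<forall>y\<in>Y. aug_p X (f th') (g th') x y = aug_p X (f th) (g th) x y"
    using eq by simp
  have "\<forall>i. \<exists>\<alpha> c. (\<forall>x\<in>X. f th x $ i = (\<Sum>l\<in>UNIV. \<alpha> l * f th' x $ l) + c) \<and> (\<forall>j k. j \<noteq> k \<longrightarrow> \<alpha> j * \<alpha> k = 0)"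
    using stepL[OF Z1 Z2 y0 ys inv eq surj[OF th']] by blast
  then obtain \<alpha> c where A: "\<And>i x. x \<in> X \<Longrightarrow> f th x $ i = (\<Sum>l\<in>UNIV. \<alpha> i l * f th' x $ l) + c i"
    and AC: "\<And>i j k. j \<noteq> k \<Longrightarrow> \<alpha> i j * \<alpha> i k = 0"
    by metis
  have "\<forall>i. \<exists>\<beta> d. (\<forall>x\<in>X. f th' x $ i = (\<Sum>l\<in>UNIV. \<beta> l * f th x $ l) + d) \<and> (\<forall>j k. j \<noteq> k \<longrightarrow> \<beta> j * \<beta> k = 0)"
    using stepL[OF Z2 Z1 y0' ys' inv' eq' surj[OF th]] by blast
  then obtain \<beta> d where B: "\<And>i x. x \<in> X \<Longrightarrow> f th' x $ i = (\<Sum>l\<in>UNIV. \<beta> i l * f th x $ l) + d i"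
    by metis
  define \<gamma> where "\<gamma> i m = (\<Sum>l\<in>UNIV. \<alpha> i l * \<beta> l m)" for i m
  define K where "K i = (\<Sum>l\<in>UNIV. \<alpha> i l * d l) + c i" for i
  have comp: "z $ i = (\<Sum>m\<in>UNIV. \<gamma> i m * z $ m) + K i" for z :: "real^'n" and i
  proof -
    obtain x where x: "x \<in> X" "f th x = z" using surj[OF th] by (metis UNIV_I imageE)
    have "z $ i = (\<Sum>l\<in>UNIV. \<alpha> i l * ((\<Sum>m\<in>UNIV. \<beta> l m * z $ m) + d l)) + c i"
      using A[OF x(1), of i] B[OF x(1)] x(2) by simp
    also have "\<dots> = (\<Sum>l\<in>UNIV. \<Sum>m\<in>UNIV. \<alpha> i l * (\<beta> l m * z $ m)) + (\<Sum>l\<in>UNIV. \<alpha> i l * d l) + c i"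
      by (simp add: distrib_left sum.distrib sum_distrib_left)
    also have "\<dots> = (\<Sum>m\<in>UNIV. \<Sum>l\<in>UNIV. \<alpha> i l * (\<beta> l m * z $ m)) + (\<Sum>l\<in>UNIV. \<alpha> i l * d l) + c i"
      using sum.swap[of "\<lambda>l m. \<alpha> i l * (\<beta> l m * z $ m)" UNIV UNIV] by simp
    also have "\<dots> = (\<Sum>m\<in>UNIV. \<gamma> i m * z $ m) + K i"
      by (simp add: \<gamma>_def K_def sum_distrib_right mult.assoc)
    finally show ?thesis .
  qed
  have K0: "K i = 0" for i using comp[of 0 i] by simp
  have gam: "\<gamma> i m = (if i = m then 1 else 0)" for i m
  proof -
    have "(\<Sum>m'\<in>UNIV. \<gamma> i m' * (axis m 1 :: real^'n) $ m') = (\<Sum>m'\<in>UNIV. if m' = m then \<gamma> i m else 0)"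
      by (rule sum.cong) (auto simp: axis_def)
    then show ?thesis using comp[of "axis m 1" i] K0[of i] by (simp add: axis_def)
  qed
  have ex: "\<exists>l. \<alpha> i l \<noteq> 0" for i
  proof (rule ccontr)
    assume "\<not> ?thesis"
    then have "\<gamma> i i = 0" by (simp add: \<gamma>_def)
    with gam[of i i] show False by simp
  qed
  define \<sigma> where "\<sigma> i = (SOME l. \<alpha> i l \<noteq> 0)" for i
  have sig: "\<alpha> i (\<sigma> i) \<noteq> 0" for i unfolding \<sigma>_def by (rule someI_ex[OF ex])
  have uniq: "\<alpha> i l = 0" if "l \<noteq> \<sigma> i" for i l
    using AC[OF that, of i] sig[of i] by simp
  have single: "(\<Sum>l\<in>UNIV. \<alpha> i l * h l) = \<alpha> i (\<sigma> i) * h (\<sigma> i)" for i and h :: "'n \<Rightarrow> real"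
  proof -
    have "(\<Sum>l\<in>UNIV. \<alpha> i l * h l) = (\<Sum>l\<in>UNIV. if l = \<sigma> i then \<alpha> i (\<sigma> i) * h (\<sigma> i) else 0)"
      by (rule sum.cong) (auto simp: uniq)
    then show ?thesis by simp
  qed
  have gam2: "\<gamma> i m = \<alpha> i (\<sigma> i) * \<beta> (\<sigma> i) m" for i m
    unfolding \<gamma>_def by (rule single)
  have inj: "inj \<sigma>"
  proof (rule injI)
    fix i i' assume s: "\<sigma> i = \<sigma> i'"
    show "i = i'"
    proof (rule ccontr)
      assume ne: "i \<noteq> i'"
      have "\<alpha> i' (\<sigma> i) * \<beta> (\<sigma> i) i = 0" using gam[of i' i] gam2[of i' i] ne s by simp
      then have "\<beta> (\<sigma> i) i = 0" using sig[of i'] s by simp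
      then show False using gam[of i i] gam2[of i i] by simp
    qed
  qed
  have perm: "\<sigma> permutes (UNIV :: 'n set)"
    using inj finite_UNIV_inj_surj[of \<sigma>] by (auto intro!: bij_imp_permutes simp: bij_def)
  show ?thesis
  proof (intro exI conjI)
    show "\<sigma> permutes UNIV" by (rule perm)
    show "\<forall>i. \<alpha> i (\<sigma> i) \<noteq> 0" using sig by blast
    show "\<forall>i. \<forall>x\<in>X. f th x $ i = \<alpha> i (\<sigma> i) * f th' x $ (\<sigma> i) + c i"
      using A single by simp
  qed
qed

end
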